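(* Let $R$ be a $*$-ring, let $a\in R$, and let $n\geq 2$ be an integer. Then $a$ is core invertible if and only if there exists $b\in {}^{\circ}a$ such that $u=a^{n}+b^{*}b$ is invertible. In this case $$a^{\mathrm{core}}=a^{n-1}u^{-1}.$$
   Context: A $*$-ring is an associative ring with identity $1$ and an involution $*$, i.e. $(a^* )^*=a$, $(ab)^*=b^*a^*$ and $(a+b)^*=a^*+b^*$. For $a\in R$, ${}^{\circ}a=\{x\in R : xa=0\}$. An element $a$ is core invertible if there is $x\in R$ with $(ax)^*=ax$, $ax^2=x$ and $xa^2=a$. Such an $x$ is unique and denoted $a^{\mathrm{core}}$. "Invertible" means having a two-sided inverse in $R$. *)

theory Defs
  imports Main
begin

class star_ring = ring_1 +
  fixes star :: "'a \<Rightarrow> 'a"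
  assumes star_star: "star (star a) = a"
      and star_mult: "star (a * b) = star b * star a"
      and star_add: "star (a + b) = star a + star b"

definition left_annihilator :: "'a::ring_1 \<Rightarrow> 'a set" where
  "left_annihilator a = {x. x * a = 0}"

definition invertible_el :: "'a::ring_1 \<Rightarrow> bool" where
  "invertible_el u \<longleftrightarrow> (\<exists>v. u * v = 1 \<and> v * u = 1)"

definition inv_el :: "'a::ring_1 \<Rightarrow> 'a" where
  "inv_el u = (THE v. u * v = 1 \<and> v * u = 1)"

definition is_core_inverse :: "'a::star_ring \<Rightarrow> 'a \<Rightarrow> bool" where
  "is_core_inverse a x \<longleftrightarrow> star (a * x) = a * x \<and> a * x^2 = x \<and> x * a^2 = a"

definition core_invertible :: "'a::star_ring \<Rightarrow> bool" where
  "core_invertible a \<longleftrightarrow> (\<exists>x. is_core_inverse a x)"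

definition core_inv :: "'a::star_ring \<Rightarrow> 'a" where
  "core_inv a = (THE x. is_core_inverse a x)"

end

theory Submission
  imports Defs
begin

lemma star_zero: "star (0::'a::star_ring) = 0"
proof -
  have "star (0::'a) = star (0 + 0)" by simp
  also have "\<dots> = star 0 + star 0" by (rule star_add)
  finally show ?thesis by simp
qed

lemma star_one: "star (1::'a::star_ring) = 1"
proof -
  have "star (1::'a) = star 1 * star (star 1)" by (simp add: star_star)
  also have "\<dots> = star (star 1 * 1)" by (simp only: star_mult)
  also have "\<dots> = 1" by (simp add: star_star)
  finally show ?thesis .
qed

lemma star_diff: "star ((x::'a::star_ring) - y) = star x - star y"
proof -
  have "star (x - y) + star y = star x" by (metis star_add diff_add_cancel)
  thus ?thesis by (simp add: eq_diff_eq)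
qed

lemma inv_el_eq:
  fixes u v :: "'a::ring_1"
  assumes "u * v = 1" "v * u = 1"
  shows "inv_el u = v"
  unfolding inv_el_def
proof (rule the_equality)
  show "u * v = 1 \<and> v * u = 1" using assms by simp
next
  fix w assume "u * w = 1 \<and> w * u = 1"
  hence "w = w * (u * v)" using assms by simp
  also have "\<dots> = (w * u) * v" by (simp add: mult.assoc)
  also have "\<dots> = v" using \<open>u * w = 1 \<and> w * u = 1\<close> by simp
  finally show "w = v" .
qed

lemma core_basic:
  fixes a x :: "'a::star_ring"
  assumes "is_core_inverse a x"
  shows "a * x * a = a" "x * a * x = x"
proof -
  have h1: "star (a * x) = a * x" "a * x * x = x" "x * a * a = a"
    using assms by (auto simp: is_core_inverse_def power2_eq_square mult.assoc)
  have "a * x * a = a * x * (x * a * a)" using h1 by simp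
  also have "\<dots> = (a * x * x) * a * a" by (simp add: mult.assoc)
  also have "\<dots> = a" using h1 by simp
  finally show "a * x * a = a" .
  have "x * a * x = x * a * (a * x * x)" using h1 by simp
  also have "\<dots> = (x * a * a) * x * x" by (simp add: mult.assoc)
  also have "\<dots> = x" using h1 by simp
  finally show "x * a * x = x" .
qed

lemma core_unique:
  fixes a x z :: "'a::star_ring"
  assumes x: "is_core_inverse a x" and z: "is_core_inverse a z"
  shows "x = z"
proof -
  have hx: "star (a * x) = a * x" "a * x * x = x" "x * a * a = a" "a * x * a = a"
    using x core_basic[OF x] by (auto simp: is_core_inverse_def power2_eq_square mult.assoc)
  have hz: "star (a * z) = a * z" "a * z * z = z" "x * a * a = a" "a * z * a = a"
    using z x core_basic[OF z] by (auto simp: is_core_inverse_def power2_eq_square mult.assoc)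
  have e1: "a * x = a * z * (a * x)" using hz(4) by (metis mult.assoc)
  have e2: "a * x = a * x * (a * z)"
  proof -
    have "a * x = star (a * z * (a * x))" using e1 hx(1) by simp
    also have "\<dots> = star (a * x) * star (a * z)" by (simp add: star_mult)
    also have "\<dots> = a * x * (a * z)" using hx(1) hz(1) by simp
    finally show ?thesis .
  qed
  have e3: "a * z = a * x * (a * z)" using hx(4) by (metis mult.assoc)
  have axz: "a * x = a * z" using e2 e3 by simp
  have "x = x * a * x" using core_basic[OF x] by simp
  also have "\<dots> = x * (a * z)" using axz by (simp add: mult.assoc)
  also have "\<dots> = x * a * (a * z * z)" using hz(2) by (simp add: mult.assoc)
  also have "\<dots> = (x * a * a) * z * z" by (simp add: mult.assoc)
  also have "\<dots> = z" using hx(3) hz(2) by (simp add: mult.assoc)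
  finally show ?thesis .
qed

lemma core_inv_eq:
  fixes a x :: "'a::star_ring"
  assumes "is_core_inverse a x"
  shows "core_inv a = x"
  unfolding core_inv_def using assms core_unique by blast

lemma pow_ax:
  fixes a x :: "'a::ring_1"
  assumes "a * x * x = x"
  shows "a ^ Suc k * x ^ Suc k = a * x"
proof (induction k)
  case 0 show ?case by simp
next
  case (Suc k)
  have "a ^ Suc (Suc k) * x ^ Suc (Suc k) = a ^ Suc k * (a * x * x) * x ^ k"
    by (simp only: power_Suc2[of a "Suc k"] power_Suc[of x] mult.assoc)
  also have "\<dots> = a ^ Suc k * x ^ Suc k" using assms by (simp only: power_Suc[of x] mult.assoc)
  finally show ?case using Suc by simp
qed

lemma pow_xa:
  fixes a x :: "'a::ring_1"
  assumes "x * a * a = a"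
  shows "x ^ Suc k * a ^ Suc k = x * a"
proof (induction k)
  case 0 show ?case by simp
next
  case (Suc k)
  have "x ^ Suc (Suc k) * a ^ Suc (Suc k) = x ^ Suc k * (x * a * a) * a ^ k"
    by (simp only: power_Suc2[of x "Suc k"] power_Suc[of a] mult.assoc)
  also have "\<dots> = x ^ Suc k * a ^ Suc k" using assms by (simp only: power_Suc[of a] mult.assoc)
  finally show ?case using Suc by simp
qed

lemma star_minus_zero: "star (- (x::'a::star_ring)) = - star x"
  using star_diff[of 0 x] by (simp add: star_zero)

lemma back_dir:
  fixes a b y c :: "'a::star_ring"
  assumes ba: "b * a = 0"
    and uy: "(a * (a * c) + star b * b) * y = 1"
    and yu: "y * (a * (a * c) + star b * b) = 1"
    and ca: "c * a = a * c"
  shows "is_core_inverse a (a * c * y)"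
proof -
  define x where "x = a * c * y"
  define p where "p = a * x"
  have sba: "star a * star b = 0" using ba by (metis star_mult star_zero)
  have s1: "star a * (a * (a * c) + star b * b) = star a * (a * (a * c))"
    by (simp add: distrib_left sba flip: mult.assoc)
  have s2: "star a = star a * p"
  proof -
    have "star a = star a * ((a * (a * c) + star b * b) * y)" using uy by simp
    also have "\<dots> = star a * (a * (a * c)) * y" using s1 by (simp flip: mult.assoc)
    also have "\<dots> = star a * p" by (simp add: p_def x_def mult.assoc)
    finally show ?thesis .
  qed
  have sp1: "star p * p = star p"
  proof -
    have "star p * p = star x * (star a * a * x)" by (simp add: p_def star_mult mult.assoc)
    also have "\<dots> = star x * star a" using s2 by (simp add: p_def mult.assoc)
    also have "\<dots> = star p" by (simp add: p_def star_mult)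
    finally show ?thesis .
  qed
  have sp: "star p = p"
  proof -
    have "p = star (star p * p)" using sp1 by (simp add: star_star)
    also have "\<dots> = star p * p" by (simp add: star_mult star_star)
    finally show ?thesis using sp1 by simp
  qed
  have s3: "p * a = a"
  proof -
    have "a = star (star a * p)" using s2 by (metis star_star)
    also have "\<dots> = p * a" using sp by (simp add: star_mult star_star)
    finally show ?thesis by simp
  qed
  hence s3': "\<And>r. a * (a * (c * (y * (a * r)))) = a * r"
    by (metis p_def x_def mult.assoc)
  have ua: "(a * (a * c) + star b * b) * a = a * (a * (c * a))"
    by (simp add: distrib_right mult.assoc ba)
  have s4: "a = y * (a * (a * (c * a)))"
    using yu ua by (metis mult.assoc mult_1_left)
  define t where "t = y * (a * c)"
  have caa: "c * (a * a) = a * (c * a)" using ca by (metis mult.assoc)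
  have s4': "t * (a * a) = a" using s4 by (simp add: t_def mult.assoc caa)
  have xa: "x * a = t * a"
  proof -
    have "t * a = t * (a * (a * (c * (y * (a * 1)))))" using s3'[of 1] by simp
    also have "\<dots> = (t * (a * a)) * (c * (y * a))" by (simp add: mult.assoc)
    also have "\<dots> = x * a" using s4' by (simp add: x_def mult.assoc)
    finally show ?thesis by simp
  qed
  have c3: "x * a ^ 2 = a"
    using xa s4' by (simp add: power2_eq_square flip: mult.assoc)
  have c2: "a * x ^ 2 = x"
  proof -
    have "a * x ^ 2 = a * (a * (c * (y * (a * (c * y)))))"
      by (simp add: power2_eq_square x_def mult.assoc)
    also have "\<dots> = x" using s3' by (simp add: x_def mult.assoc)
    finally show ?thesis .
  qed
  show ?thesis unfolding x_def[symmetric] is_core_inverse_def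
    using sp c2 c3 by (simp add: p_def)
qed

lemma fwd_dir:
  fixes a x :: "'a::star_ring"
  assumes cx: "is_core_inverse a x"
  shows "(1 - a * x) * a = 0"
    and "invertible_el (a ^ Suc k + star (1 - a * x) * (1 - a * x))"
proof -
  have h: "star (a * x) = a * x" "a * x * x = x" "x * a * a = a"
    using cx by (auto simp: is_core_inverse_def power2_eq_square mult.assoc)
  have axa: "a * x * a = a" and xax: "x * a * x = x" using core_basic[OF cx] by auto
  show "(1 - a * x) * a = 0" using axa by (simp add: algebra_simps)
  define P where "P = a * x"
  define Q where "Q = x * a"
  define A where "A = a ^ Suc k"
  define X where "X = x ^ Suc k"
  have PP: "P * P = P" unfolding P_def by (metis axa mult.assoc)
  have sb: "star (1 - P) * (1 - P) = 1 - P"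
    using PP h(1) by (simp add: star_diff star_one P_def algebra_simps)
  have AX: "A * X = P" using pow_ax[OF h(2)] by (simp add: A_def X_def P_def)
  have XA: "X * A = Q" using pow_xa[OF h(3)] by (simp add: A_def X_def Q_def)
  have AQ: "A * Q = A"
  proof -
    have "A * Q = a ^ k * (a * x * a)" by (simp only: A_def Q_def power_Suc2 mult.assoc)
    thus ?thesis using axa by (metis A_def power_Suc2 mult.assoc)
  qed
  have PX: "P * X = X"
  proof -
    have "P * X = (a * x * x) * x ^ k" by (simp add: P_def X_def mult.assoc)
    thus ?thesis using h(2) by (simp add: X_def)
  qed
  have PQ: "P * Q = Q"
  proof -
    have "P * Q = (a * x * x) * a" by (simp add: P_def Q_def mult.assoc)
    thus ?thesis using h(2) by (simp add: Q_def)
  qed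
  have XP: "X * P = X"
  proof -
    have "X * P = x ^ k * (x * a * x)" by (simp only: P_def X_def power_Suc2 mult.assoc)
    thus ?thesis using xax by (metis X_def power_Suc2 mult.assoc)
  qed
  have QA: "Q * A = A"
  proof -
    have "Q * A = (x * a * a) * a ^ k" by (simp add: A_def Q_def mult.assoc)
    thus ?thesis using h(3) by (simp add: A_def)
  qed
  have QP: "Q * P = P"
  proof -
    have "Q * P = (x * a * a) * x" by (simp add: P_def Q_def mult.assoc)
    thus ?thesis using h(3) by (simp add: P_def)
  qed
  have uv: "(A + (1 - P)) * (X + (1 - Q)) = 1"
  proof -
    have "(A + (1 - P)) * (X + (1 - Q)) = A * X + A - A * Q + X + 1 - Q - P * X - P + P * Q"
      by (simp add: algebra_simps)
    thus ?thesis by (simp add: AX AQ PX PQ)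
  qed
  have vu: "(X + (1 - Q)) * (A + (1 - P)) = 1"
  proof -
    have "(X + (1 - Q)) * (A + (1 - P)) = X * A + X - X * P + A + 1 - P - Q * A - Q + Q * P"
      by (simp add: algebra_simps)
    thus ?thesis by (simp add: XA XP QA QP)
  qed
  show "invertible_el (a ^ Suc k + star (1 - a * x) * (1 - a * x))"
    unfolding invertible_el_def using uv vu sb by (auto simp: A_def P_def)
qed

theorem corollary2p9:
  fixes a :: "'a::star_ring" and n :: nat
  assumes "n \<ge> 2"
  shows "(core_invertible a \<longleftrightarrow>
            (\<exists>b \<in> left_annihilator a. invertible_el (a ^ n + star b * b)))
       \<and> (\<forall>b \<in> left_annihilator a. invertible_el (a ^ n + star b * b) \<longrightarrow>
            core_inv a = a ^ (n - 1) * inv_el (a ^ n + star b * b))"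
proof -
  obtain j where nj: "n = Suc (Suc j)" using assms by (metis add_2_eq_Suc le_Suc_ex)
  have an: "a ^ n = a * (a * a ^ j)" and an1: "a ^ (n - 1) = a * a ^ j" using nj by simp_all
  have key: "is_core_inverse a (a ^ (n - 1) * inv_el (a ^ n + star b * b))
             \<and> core_inv a = a ^ (n - 1) * inv_el (a ^ n + star b * b)"
    if b: "b \<in> left_annihilator a" and iv: "invertible_el (a ^ n + star b * b)" for b
  proof -
    obtain y where y: "(a ^ n + star b * b) * y = 1" "y * (a ^ n + star b * b) = 1"
      using iv unfolding invertible_el_def by blast
    have iy: "inv_el (a ^ n + star b * b) = y" using inv_el_eq[OF y] .
    have ba: "b * a = 0" using b by (simp add: left_annihilator_def)
    have ic: "is_core_inverse a (a * a ^ j * y)"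
      using back_dir[OF ba, of "a ^ j" y] y an by (simp add: power_commutes)
    show ?thesis using ic core_inv_eq[OF ic] iy an1 by simp
  qed
  have fwd: "\<exists>b \<in> left_annihilator a. invertible_el (a ^ n + star b * b)"
    if ci: "core_invertible a"
  proof -
    obtain x where x: "is_core_inverse a x" using ci unfolding core_invertible_def by blast
    show ?thesis using fwd_dir(1)[OF x] fwd_dir(2)[OF x, where k = "Suc j"] nj
      by (auto simp: left_annihilator_def)
  qed
  show ?thesis using key fwd by (auto simp: core_invertible_def)
qed

end
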